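(* Let $b,\ell\ge1$, $s=2^b$, and let $G'$ be obtained from $G_{b,\ell}$ by deleting an arbitrary subset $R$ of the vertices $\{v_{\ell,\vec j}:\vec j\in[0,s-1]^\ell\}$ together with their incident edges. Let $\vec x,\vec z\in[0,s-1]^\ell$ with $z_k-x_k$ even for all $k$. Then whether $v_{\ell,(\vec x+\vec z)/2}\in R$ is determined by $\vec x$, $\vec z$ and the (possibly infinite) length of a shortest path between $v_{0,\vec x}$ and $v_{2\ell,\vec z}$ in $G'$; namely $v_{\ell,(\vec x+\vec z)/2}\notin R$ iff this distance equals $\mathrm{dist}_{G_{b,\ell}}(v_{0,\vec x},v_{2\ell,\vec z})$.
   Context: Notation $[a,b]=\{a,\dots,b\}$. Fix integers $b,\ell\ge1$, $s=2^b$, $A=3\ell s^2$. The weighted graph $H_{b,\ell}$ has vertex set $\bigcup_{i=0}^{2\ell}V_i$, $V_i=\{v_{i,\vec j}:\vec j\in[0,s-1]^\ell\}$; for $i\in[0,2\ell-1]$ let $c(i)=i+1$ if $i<\ell$, $c(i)=2\ell-i$ if $i\ge\ell$; $v_{i,\vec j}$ and $v_{i+1,\vec j'}$ are adjacent iff $j_k=j'_k$ for all $k\ne c(i)$, with weight $A+(j_{c(i)}-j'_{c(i)})^2$; no other edges. The unweighted graph $G_{b,\ell}$: each $v\in V_i$ is kept and gets attached (root adjacent to $v$) a complete binary tree $T^{\mathrm{in}}_v$ of depth $b$ (only if $i>0$) with leaves $v^{\mathrm{in}}_u$ for the neighbors $u\in V_{i-1}$, and a complete binary tree $T^{\mathrm{out}}_v$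 of depth $b$ (only if $i<2\ell$) with leaves $v^{\mathrm{out}}_u$ for the neighbors $u\in V_{i+1}$; all trees disjoint; for every edge $e=\{u,v\}$ of $H_{b,\ell}$, $u\in V_i$, $v\in V_{i+1}$, the leaves $u^{\mathrm{out}}_v$ and $v^{\mathrm{in}}_u$ are joined by a path of length $w(e)-2b-2$ through new vertices. *)

theory Defs
  imports Main "HOL-Library.Extended_Nat"
begin

text \<open>Vertices of G_{b,l}:
  Main i j      = v_{i,j}
  Tin i j t     = node of the tree T^in_{v_{i,j}} at address t (root = [], leaves = length b)
  Tout i j t    = node of the tree T^out_{v_{i,j}}
  Mid i j j' k  = k-th internal vertex of the subdivided path for the H-edge {v_{i,j}, v_{i+1,j'}}\<close>

datatype vtx = Main nat "nat list" | Tin nat "nat list" "bool list"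
  | Tout nat "nat list" "bool list" | Mid nat "nat list" "nat list" nat

definition vecok :: "nat \<Rightarrow> nat \<Rightarrow> nat list \<Rightarrow> bool" where
  "vecok l s j \<longleftrightarrow> length j = l \<and> (\<forall>k<l. j ! k < s)"

text \<open>c(i), 1-based coordinate index\<close>
definition cidx :: "nat \<Rightarrow> nat \<Rightarrow> nat" where
  "cidx l i = (if i < l then i + 1 else 2 * l - i)"

definition Hadj :: "nat \<Rightarrow> nat \<Rightarrow> nat \<Rightarrow> nat list \<Rightarrow> nat list \<Rightarrow> bool" where
  "Hadj b l i j j' \<longleftrightarrow> i < 2 * l \<and> vecok l (2 ^ b) j \<and> vecok l (2 ^ b) j'
     \<and> (\<forall>k<l. k \<noteq> cidx l i - 1 \<longrightarrow> j ! k = j' ! k)"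

definition Hwt :: "nat \<Rightarrow> nat \<Rightarrow> nat \<Rightarrow> nat list \<Rightarrow> nat list \<Rightarrow> nat" where
  "Hwt b l i j j' = nat (int (3 * l * (2 ^ b) ^ 2)
      + (int (j ! (cidx l i - 1)) - int (j' ! (cidx l i - 1))) ^ 2)"

definition plen :: "nat \<Rightarrow> nat \<Rightarrow> nat \<Rightarrow> nat list \<Rightarrow> nat list \<Rightarrow> nat" where
  "plen b l i j j' = Hwt b l i j j' - 2 * b - 2"

text \<open>fin i j y: address of the leaf of T^in_{v_{i,j}} for the neighbour of v_{i,j} in V_{i-1}
  whose c(i-1)-th coordinate is y; fout analogously for T^out and V_{i+1} (coordinate c(i)).\<close>
definition pnode :: "nat \<Rightarrow> nat \<Rightarrow> (nat \<Rightarrow> nat list \<Rightarrow> nat \<Rightarrow> bool list)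
    \<Rightarrow> (nat \<Rightarrow> nat list \<Rightarrow> nat \<Rightarrow> bool list) \<Rightarrow> nat \<Rightarrow> nat list \<Rightarrow> nat list \<Rightarrow> nat \<Rightarrow> vtx" where
  "pnode b l fin fout i j j' k =
     (if k = 0 then Tout i j (fout i j (j' ! (cidx l i - 1)))
      else if k = plen b l i j j' then Tin (Suc i) j' (fin (Suc i) j' (j ! (cidx l i - 1)))
      else Mid i j j' k)"

definition dedge :: "nat \<Rightarrow> nat \<Rightarrow> (nat \<Rightarrow> nat list \<Rightarrow> nat \<Rightarrow> bool list)
    \<Rightarrow> (nat \<Rightarrow> nat list \<Rightarrow> nat \<Rightarrow> bool list) \<Rightarrow> vtx \<Rightarrow> vtx \<Rightarrow> bool" where
  "dedge b l fin fout u v \<longleftrightarrow>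
     (\<exists>i j. 0 < i \<and> i \<le> 2 * l \<and> vecok l (2 ^ b) j \<and> u = Main i j \<and> v = Tin i j [])
   \<or> (\<exists>i j. i < 2 * l \<and> vecok l (2 ^ b) j \<and> u = Main i j \<and> v = Tout i j [])
   \<or> (\<exists>i j t x. 0 < i \<and> i \<le> 2 * l \<and> vecok l (2 ^ b) j \<and> length t < b
        \<and> u = Tin i j t \<and> v = Tin i j (t @ [x]))
   \<or> (\<exists>i j t x. i < 2 * l \<and> vecok l (2 ^ b) j \<and> length t < b
        \<and> u = Tout i j t \<and> v = Tout i j (t @ [x]))
   \<or> (\<exists>i j j' k. Hadj b l i j j' \<and> k < plen b l i j j'
        \<and> u = pnode b l fin fout i j j' k \<and> v = pnode b l fin fout i j j' (Suc k))"

definition Gedge :: "nat \<Rightarrow> nat \<Rightarrow> (nat \<Rightarrow> nat list \<Rightarrow> nat \<Rightarrow> bool list)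
    \<Rightarrow> (nat \<Rightarrow> nat list \<Rightarrow> nat \<Rightarrow> bool list) \<Rightarrow> vtx \<Rightarrow> vtx \<Rightarrow> bool" where
  "Gedge b l fin fout u v \<longleftrightarrow> dedge b l fin fout u v \<or> dedge b l fin fout v u"

definition Gdel :: "nat \<Rightarrow> nat \<Rightarrow> (nat \<Rightarrow> nat list \<Rightarrow> nat \<Rightarrow> bool list)
    \<Rightarrow> (nat \<Rightarrow> nat list \<Rightarrow> nat \<Rightarrow> bool list) \<Rightarrow> nat list set \<Rightarrow> vtx \<Rightarrow> vtx \<Rightarrow> bool" where
  "Gdel b l fin fout R u v \<longleftrightarrow> Gedge b l fin fout u v
     \<and> u \<notin> Main l ` R \<and> v \<notin> Main l ` R"

definition walk :: "('a \<Rightarrow> 'a \<Rightarrow> bool) \<Rightarrow> 'a list \<Rightarrow> bool" where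
  "walk E xs \<longleftrightarrow> xs \<noteq> [] \<and> (\<forall>k. Suc k < length xs \<longrightarrow> E (xs ! k) (xs ! Suc k))"

definition gdist :: "('a \<Rightarrow> 'a \<Rightarrow> bool) \<Rightarrow> 'a \<Rightarrow> 'a \<Rightarrow> enat" where
  "gdist E a c = (INF xs \<in> {xs. walk E xs \<and> hd xs = a \<and> last xs = c}. enat (length xs - 1))"

end

theory Submission
  imports Defs
begin


inductive path :: "('a \<Rightarrow> 'a \<Rightarrow> bool) \<Rightarrow> 'a \<Rightarrow> 'a \<Rightarrow> nat \<Rightarrow> bool" for E where
  pnil: "path E u u 0"
| pcons: "E u v \<Longrightarrow> path E v w n \<Longrightarrow> path E u w (Suc n)"

lemma walk_single: "walk E [x]"
  by (simp add: walk_def)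

lemma walk_Cons2: "walk E (x # y # xs) \<longleftrightarrow> E x y \<and> walk E (y # xs)"
  unfolding walk_def
proof safe
  fix k assume "\<forall>k. Suc k < length (x # y # xs) \<longrightarrow> E ((x # y # xs) ! k) ((x # y # xs) ! Suc k)"
    and "Suc k < length (y # xs)"
  then show "E ((y # xs) ! k) ((y # xs) ! Suc k)" by (metis Suc_less_eq length_Cons nth_Cons_Suc)
next
  assume "\<forall>k. Suc k < length (x # y # xs) \<longrightarrow> E ((x # y # xs) ! k) ((x # y # xs) ! Suc k)"
  then show "E x y" by force
next
  fix k assume "E x y" "\<forall>k. Suc k < length (y # xs) \<longrightarrow> E ((y # xs) ! k) ((y # xs) ! Suc k)"
    "Suc k < length (x # y # xs)"
  then show "E ((x # y # xs) ! k) ((x # y # xs) ! Suc k)"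
    by (cases k) auto
qed

lemma path_walk: "path E u v n \<Longrightarrow> \<exists>xs. walk E xs \<and> hd xs = u \<and> last xs = v \<and> length xs = Suc n"
proof (induction rule: path.induct)
  case (pnil u) then show ?case by (intro exI[of _ "[u]"]) (simp add: walk_single)
next
  case (pcons u v w n)
  then obtain xs where xs: "walk E xs" "hd xs = v" "last xs = w" "length xs = Suc n" by blast
  then obtain ys where ys: "xs = v # ys" by (cases xs) auto
  show ?case
  proof (intro exI[of _ "u # xs"] conjI)
    show "walk E (u # xs)" using xs ys pcons(1) by (cases ys) (auto simp: walk_Cons2)
  qed (use xs ys in auto)
qed

lemma path_trans: "path E u v m \<Longrightarrow> path E v w n \<Longrightarrow> path E u w (m + n)"
  by (induction rule: path.induct) (auto intro: path.intros)

lemma path_edge: "E u v \<Longrightarrow> path E u v 1"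
  using pcons[OF _ pnil] by fastforce

lemma gdist_le: "path E u v n \<Longrightarrow> gdist E u v \<le> enat n"
  unfolding gdist_def
  by (drule path_walk) (auto intro!: INF_lower2)

lemma walk_pot:
  assumes w: "walk E xs" and lip: "\<And>u v. E u v \<Longrightarrow> \<bar>\<phi> u - \<phi> v\<bar> \<le> (1::int)"
    and pq: "p \<le> q" "q < length xs"
  shows "\<bar>\<phi> (xs ! q) - \<phi> (xs ! p)\<bar> \<le> int (q - p)"
  using pq
proof (induction q)
  case 0 then show ?case by simp
next
  case (Suc q)
  show ?case
  proof (cases "p = Suc q")
    case True then show ?thesis by simp
  next
    case False
    then have "p \<le> q" using Suc by simp
    with Suc have ih: "\<bar>\<phi> (xs ! q) - \<phi> (xs ! p)\<bar> \<le> int (q - p)" by simp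
    have "E (xs ! q) (xs ! Suc q)" using w Suc(3) unfolding walk_def by blast
    then have "\<bar>\<phi> (xs ! q) - \<phi> (xs ! Suc q)\<bar> \<le> 1" by (rule lip)
    with ih \<open>p \<le> q\<close> show ?thesis by linarith
  qed
qed

lemma walk_mono: "walk E xs \<Longrightarrow> (\<And>u v. E u v \<Longrightarrow> E' u v) \<Longrightarrow> walk E' xs"
  unfolding walk_def by blast

lemma num1: "b \<ge> 1 \<Longrightarrow> 2 * b + 2 \<le> ((2::nat) ^ b) ^ 2"
proof (induction b rule: nat_induct_at_least)
  case base then show ?case by simp
next
  case (Suc n)
  have "((2::nat) ^ Suc n) ^ 2 = 4 * (2 ^ n) ^ 2" by (simp add: power_mult_distrib)
  with Suc show ?case by simp
qed




lemma leaf_len: "bij_betw f {..<(2::nat)^b} {t. length t = b} \<Longrightarrow> y < 2^b \<Longrightarrow> length (f y) = b"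
  by (auto dest: bij_betwE)

lemma cidx_lt: "i < 2*l \<Longrightarrow> cidx l i - 1 < l"
  by (auto simp: cidx_def)
lemma cidx_low: "i < l \<Longrightarrow> cidx l i - 1 = i"
  by (auto simp: cidx_def)
lemma cidx_high: "l \<le> i \<Longrightarrow> i < 2*l \<Longrightarrow> cidx l i - 1 = 2*l - Suc i"
  by (auto simp: cidx_def)

lemma vecok_nth: "vecok l s j \<Longrightarrow> k < l \<Longrightarrow> j ! k < s"
  by (auto simp: vecok_def)

definition phiG :: "nat \<Rightarrow> nat \<Rightarrow> (nat \<Rightarrow> nat list \<Rightarrow> int) \<Rightarrow> vtx \<Rightarrow> int" where
  "phiG b l F v = (case v of Main i j \<Rightarrow> F i j
     | Tin i j t \<Rightarrow> F i j - 1 - int (length t)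
     | Tout i j t \<Rightarrow> F i j + 1 + int (length t)
     | Mid i j j' k \<Rightarrow> min (F i j + int b + 1 + int k)
          (F (Suc i) j' - int b - 1 + int (plen b l i j j') - int k))"

lemma phi_pnode:
  assumes hin: "\<And>i j. 0 < i \<Longrightarrow> i \<le> 2 * l \<Longrightarrow> vecok l (2 ^ b) j \<Longrightarrow>
           bij_betw (fin i j) {..<2 ^ b} {t. length t = b}"
    and hout: "\<And>i j. i < 2 * l \<Longrightarrow> vecok l (2 ^ b) j \<Longrightarrow>
           bij_betw (fout i j) {..<2 ^ b} {t. length t = b}"
    and H: "Hadj b l i j j'" and k: "k \<le> plen b l i j j'" and p0: "0 < plen b l i j j'"
    and c1: "F i j + int b + 1 \<le> F (Suc i) j' - int b - 1 + int (plen b l i j j')"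
    and c2: "F (Suc i) j' - int b - 1 \<le> F i j + int b + 1 + int (plen b l i j j')"
  shows "phiG b l F (pnode b l fin fout i j j' k) = min (F i j + int b + 1 + int k)
          (F (Suc i) j' - int b - 1 + int (plen b l i j j') - int k)"
proof -
  have i: "i < 2*l" and vj: "vecok l (2^b) j" and vj': "vecok l (2^b) j'" using H by (auto simp: Hadj_def)
  have cl: "cidx l i - 1 < l" using cidx_lt[OF i] .
  have l1: "length (fout i j (j' ! (cidx l i - 1))) = b"
    by (rule leaf_len[OF hout[OF i vj]]) (rule vecok_nth[OF vj' cl])
  have l2: "length (fin (Suc i) j' (j ! (cidx l i - 1))) = b"
    by (rule leaf_len[OF hin]) (use i vj' vecok_nth[OF vj cl] in auto)
  show ?thesis
    using l1 l2 c1 c2 p0 k by (auto simp: pnode_def phiG_def)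
qed

lemma phi_lip:
  assumes hin: "\<And>i j. 0 < i \<Longrightarrow> i \<le> 2 * l \<Longrightarrow> vecok l (2 ^ b) j \<Longrightarrow>
           bij_betw (fin i j) {..<2 ^ b} {t. length t = b}"
    and hout: "\<And>i j. i < 2 * l \<Longrightarrow> vecok l (2 ^ b) j \<Longrightarrow>
           bij_betw (fout i j) {..<2 ^ b} {t. length t = b}"
    and hF: "\<And>i j j'. Hadj b l i j j' \<Longrightarrow> F (Suc i) j' - F i j \<le> int (Hwt b l i j j')
                 \<and> F i j - F (Suc i) j' \<le> int (Hwt b l i j j') - 4 * int b - 4"
    and hW: "\<And>i j j'. Hadj b l i j j' \<Longrightarrow> 2 * b + 2 < Hwt b l i j j'"
    and e: "dedge b l fin fout u v"
  shows "\<bar>phiG b l F u - phiG b l F v\<bar> \<le> 1"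
  using e unfolding dedge_def
proof (elim disjE exE conjE)
  fix i j j' k
  assume H: "Hadj b l i j j'" and k: "k < plen b l i j j'" and u: "u = pnode b l fin fout i j j' k"
    and v: "v = pnode b l fin fout i j j' (Suc k)"
  have W: "2 * b + 2 < Hwt b l i j j'" by (rule hW[OF H])
  then have pl: "int (plen b l i j j') = int (Hwt b l i j j') - 2 * int b - 2"
    by (simp add: plen_def of_nat_diff)
  have c1: "F i j + int b + 1 \<le> F (Suc i) j' - int b - 1 + int (plen b l i j j')"
   and c2: "F (Suc i) j' - int b - 1 \<le> F i j + int b + 1 + int (plen b l i j j')"
    using hF[OF H] pl by linarith+
  have p0: "0 < plen b l i j j'" using k by simp
  show ?thesis
    unfolding u v
    using phi_pnode[OF hin hout H _ p0 c1 c2, where k=k] phi_pnode[OF hin hout H _ p0 c1 c2, where k="Suc k"] k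
    by (simp add: min_def)
qed (auto simp: phiG_def)




definition Pot :: "nat \<Rightarrow> int \<Rightarrow> int \<Rightarrow> nat list \<Rightarrow> nat \<Rightarrow> nat list \<Rightarrow> int" where
  "Pot l A B a t j = int (min t l) * A + (\<Sum>k<l. if k < min t l then (int (j!k) - int (a!k))^2
        else if j!k = a!k then 0 else B)"

lemma sq_bound: "p < s \<Longrightarrow> q < s \<Longrightarrow> (int p - int q)^2 \<le> (int s - 1)^2"
proof -
  assume "p < s" "q < s"
  then have "\<bar>int p - int q\<bar> \<le> int s - 1" by linarith
  then have "\<bar>int p - int q\<bar>^2 \<le> (int s - 1)^2" by (rule power_mono) simp
  then show ?thesis by simp
qed

lemma pot_step:
  assumes c: "c < l" and ct: "t < l \<Longrightarrow> c = t" and eq: "\<forall>k<l. k \<noteq> c \<longrightarrow> u!k = v!k"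
    and s: "u!c < s" "v!c < s" "a!c < s"
    and B: "(int s - 1)^2 \<le> B" and BK: "B + K \<le> 2*A" and AK: "(int s - 1)^2 + K \<le> A" and K0: "0 \<le> K"
  shows "Pot l A B a (Suc t) v - Pot l A B a t u \<le> A + (int(u!c) - int(v!c))^2
       \<and> Pot l A B a t u - Pot l A B a (Suc t) v \<le> A + (int(u!c) - int(v!c))^2 - K"
proof -
  define g where "g t j k = (if k < min t l then (int (j!k) - int (a!k))^2
        else if j!k = a!k then 0 else B)" for t j k
  have P: "Pot l A B a t j = int (min t l) * A + (\<Sum>k<l. g t j k)" for t j
    by (simp add: Pot_def g_def)
  have split: "(\<Sum>k<l. g t j k) = g t j c + (\<Sum>k\<in>{..<l}-{c}. g t j k)" for t j
    using c by (simp add: sum.remove)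
  have rest: "(\<Sum>k\<in>{..<l}-{c}. g t u k) = (\<Sum>k\<in>{..<l}-{c}. g (Suc t) v k)"
  proof (rule sum.cong)
    fix k assume k: "k \<in> {..<l}-{c}"
    then have "u!k = v!k" using eq by auto
    moreover have "(k < min t l) = (k < min (Suc t) l)"
      using k ct by (cases "t < l") auto
    ultimately show "g t u k = g (Suc t) v k" by (simp add: g_def)
  qed simp
  have sq1: "(int (v!c) - int (a!c))^2 \<le> (int s - 1)^2" "(int (u!c) - int (a!c))^2 \<le> (int s - 1)^2"
    using sq_bound s by auto
  have nn: "0 \<le> (int(u!c) - int(v!c))^2" "0 \<le> (int (v!c) - int (a!c))^2" "0 \<le> (int (u!c) - int (a!c))^2"
    by simp_all
  have cm: "(int (a!c) - int (v!c))^2 = (int (v!c) - int (a!c))^2" by (simp add: power2_commute)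
  have s0: "0 \<le> (int s - 1)^2" by simp
  show ?thesis
  proof (cases "t < l")
    case True
    then have ctt: "c = t" using ct by simp
    have m1: "min t l = t" "min (Suc t) l = Suc t" using True by auto
    have g1: "g t u c = (if u!c = a!c then 0 else B)" "g (Suc t) v c = (int (v!c) - int (a!c))^2"
      using ctt m1 by (auto simp: g_def)
    show ?thesis
    proof (cases "u!c = a!c")
      case True
      then show ?thesis unfolding P using split[of t u] split[of "Suc t" v] rest g1 m1 nn sq1 AK cm s0 K0
        apply (simp add: algebra_simps) using s0 nn by linarith
    next
      case False
      then show ?thesis unfolding P using split[of t u] split[of "Suc t" v] rest g1 m1 nn sq1 AK cm s0 K0 BK B
        apply (simp add: algebra_simps) using s0 nn by linarith
    qed
  next
    case False
    have m1: "min t l = l" "min (Suc t) l = l" using False by auto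
    have g1: "g t u c = (int (u!c) - int (a!c))^2" "g (Suc t) v c = (int (v!c) - int (a!c))^2"
      using c m1 by (auto simp: g_def)
    show ?thesis unfolding P using split[of t u] split[of "Suc t" v] rest g1 m1 nn sq1 AK cm s0 K0
      apply (simp add: algebra_simps) using s0 nn by linarith
  qed
qed




locale ctx =
  fixes b l :: nat and fin fout :: "nat \<Rightarrow> nat list \<Rightarrow> nat \<Rightarrow> bool list" and x z :: "nat list"
  assumes b1: "b \<ge> 1" and l1: "l \<ge> 1"
    and hin: "\<And>i j. 0 < i \<Longrightarrow> i \<le> 2 * l \<Longrightarrow> vecok l (2 ^ b) j \<Longrightarrow>
           bij_betw (fin i j) {..<2 ^ b} {t. length t = b}"
    and hout: "\<And>i j. i < 2 * l \<Longrightarrow> vecok l (2 ^ b) j \<Longrightarrow>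
           bij_betw (fout i j) {..<2 ^ b} {t. length t = b}"
    and vx: "vecok l (2 ^ b) x" and vz: "vecok l (2 ^ b) z"
begin

definition "AA = int (3 * l * (2^b)^2)"
definition "BB = int ((2^b)^2)"
definition "KK = 4 * int b + 4"

lemma consts_ok: "(int (2^b) - 1)^2 \<le> BB" "BB + KK \<le> 2 * AA" "(int (2^b) - 1)^2 + KK \<le> AA" "0 \<le> KK"
proof -
  have n: "2 * b + 2 \<le> (2^b)^2" by (rule num1[OF b1])
  have s1: "(1::int) \<le> int (2^b)" by simp
  have e: "(int (2^b) - 1)^2 \<le> int (2^b)^2"
    using s1 by (intro power_mono) auto
  have l: "int ((2^b)^2) \<le> int (l * (2^b)^2)" using l1 by simp
  show "(int (2^b) - 1)^2 \<le> BB" using e by (simp add: BB_def)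
  have ll: "(2^b)^2 \<le> l * ((2::nat)^b)^2" using mult_le_mono1[OF l1, of "(2^b)^2"] by simp
  have "(2^b)^2 + (4*b+4) \<le> 2*(3*l*((2::nat)^b)^2)" using n ll by linarith
  then have "int ((2^b)^2 + (4*b+4)) \<le> int (2*(3*l*((2::nat)^b)^2))" by (rule of_nat_mono)
  then show "BB + KK \<le> 2 * AA" by (simp add: BB_def KK_def AA_def)
  have "(2^b)^2 + (4*b+4) \<le> 3*l*((2::nat)^b)^2" using n ll by linarith
  then have "int ((2^b)^2 + (4*b+4)) \<le> int (3*l*((2::nat)^b)^2)" by (rule of_nat_mono)
  then have "int ((2^b)^2) + KK \<le> AA" by (simp add: KK_def AA_def)
  moreover have "int ((2^b)^2) = int (2^b) ^ 2" by simp
  ultimately show "(int (2^b) - 1)^2 + KK \<le> AA" using e by linarith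
  show "0 \<le> KK" by (simp add: KK_def)
qed

lemma Hwt_int: "int (Hwt b l i j j') = AA + (int (j ! (cidx l i - 1)) - int (j' ! (cidx l i - 1)))^2"
  by (simp add: Hwt_def AA_def)

lemma Hwt_big: "2 * b + 2 < Hwt b l i j j'"
proof -
  have n: "2 * b + 2 \<le> (2^b)^2" by (rule num1[OF b1])
  have "(2^b)^2 > (0::nat)" by simp
  have "(2^b)^2 \<le> l * ((2::nat)^b)^2" using mult_le_mono1[OF l1, of "(2^b)^2"] by simp
  then have "2*b+2 < 3 * l * ((2::nat)^b)^2" using n \<open>(2^b)^2 > (0::nat)\<close> by linarith
  then have "int (2*b+2) < AA" unfolding AA_def of_nat_less_iff .
  moreover have "AA \<le> int (Hwt b l i j j')" by (simp add: Hwt_int)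
  ultimately show ?thesis by linarith
qed

definition "Fx i j = Pot l AA BB x i j"
definition "Fz i j = - Pot l AA BB z (2 * l - i) j"

lemma Hadj_facts:
  assumes "Hadj b l i j j'"
  shows "i < 2*l" "vecok l (2^b) j" "vecok l (2^b) j'" "cidx l i - 1 < l"
    "\<forall>k<l. k \<noteq> cidx l i - 1 \<longrightarrow> j ! k = j' ! k"
  using assms cidx_lt by (auto simp: Hadj_def)

lemma hFx: "Hadj b l i j j' \<Longrightarrow> Fx (Suc i) j' - Fx i j \<le> int (Hwt b l i j j')
                 \<and> Fx i j - Fx (Suc i) j' \<le> int (Hwt b l i j j') - 4 * int b - 4"
proof -
  assume H: "Hadj b l i j j'"
  note f = Hadj_facts[OF H]
  have "Pot l AA BB x (Suc i) j' - Pot l AA BB x i j \<le> AA + (int(j!(cidx l i - 1)) - int(j'!(cidx l i - 1)))^2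
       \<and> Pot l AA BB x i j - Pot l AA BB x (Suc i) j' \<le> AA + (int(j!(cidx l i - 1)) - int(j'!(cidx l i - 1)))^2 - KK"
    by (rule pot_step[OF f(4) _ f(5) vecok_nth[OF f(2) f(4)] vecok_nth[OF f(3) f(4)] vecok_nth[OF vx f(4)] consts_ok])
      (simp add: cidx_def)
  then show ?thesis by (simp add: Fx_def Hwt_int KK_def)
qed

lemma hFz: "Hadj b l i j j' \<Longrightarrow> Fz (Suc i) j' - Fz i j \<le> int (Hwt b l i j j')
                 \<and> Fz i j - Fz (Suc i) j' \<le> int (Hwt b l i j j') - 4 * int b - 4"
proof -
  assume H: "Hadj b l i j j'"
  note f = Hadj_facts[OF H]
  define t where "t = 2 * l - Suc i"
  have t1: "2 * l - i = Suc t" "2 * l - Suc i = t" using f(1) by (auto simp: t_def)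
  have ct: "t < l \<Longrightarrow> cidx l i - 1 = t" using f(1) by (auto simp: t_def cidx_def)
  have sw: "\<forall>k<l. k \<noteq> cidx l i - 1 \<longrightarrow> j' ! k = j ! k" using f(5) by auto
  have "Pot l AA BB z (Suc t) j - Pot l AA BB z t j' \<le> AA + (int(j'!(cidx l i - 1)) - int(j!(cidx l i - 1)))^2
       \<and> Pot l AA BB z t j' - Pot l AA BB z (Suc t) j \<le> AA + (int(j'!(cidx l i - 1)) - int(j!(cidx l i - 1)))^2 - KK"
    by (rule pot_step[OF f(4) ct sw vecok_nth[OF f(3) f(4)] vecok_nth[OF f(2) f(4)] vecok_nth[OF vz f(4)] consts_ok])
  then show ?thesis by (simp add: Fz_def Hwt_int KK_def t1 power2_commute)
qed

lemma lip_x: "Gedge b l fin fout u v \<Longrightarrow> \<bar>phiG b l Fx u - phiG b l Fx v\<bar> \<le> 1"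
  unfolding Gedge_def
  using phi_lip[OF hin hout hFx Hwt_big, where u=u and v=v] phi_lip[OF hin hout hFx Hwt_big, where u=v and v=u]
  by (auto simp: abs_minus_commute)

lemma lip_z: "Gedge b l fin fout u v \<Longrightarrow> \<bar>phiG b l Fz u - phiG b l Fz v\<bar> \<le> 1"
  unfolding Gedge_def
  using phi_lip[OF hin hout hFz Hwt_big, where u=u and v=v] phi_lip[OF hin hout hFz Hwt_big, where u=v and v=u]
  by (auto simp: abs_minus_commute)

end



definition below :: "nat \<Rightarrow> vtx \<Rightarrow> bool" where
  "below l v = (case v of Main i _ \<Rightarrow> i < l | Tin i _ _ \<Rightarrow> i \<le> l | Tout i _ _ \<Rightarrow> i < l
      | Mid i _ _ _ \<Rightarrow> i < l)"

lemma below_pnode: "below l (pnode b l fin fout i j j' k) \<longleftrightarrow> i < l"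
  by (auto simp: pnode_def below_def)

lemma below_step:
  assumes "dedge b l fin fout u v"
  shows "(below l u \<longrightarrow> below l v \<or> (\<exists>j. v = Main l j \<and> vecok l (2^b) j))
       \<and> (below l v \<longrightarrow> below l u \<or> (\<exists>j. u = Main l j \<and> vecok l (2^b) j))"
  using assms unfolding dedge_def
  apply (elim disjE exE conjE)
      apply (auto simp: below_def)[4]
  apply (simp add: below_pnode)
  done

lemma below_edge:
  "Gedge b l fin fout u v \<Longrightarrow> below l u \<Longrightarrow> below l v \<or> (\<exists>j. v = Main l j \<and> vecok l (2^b) j)"
  unfolding Gedge_def using below_step by blast

lemma walk_cross:
  assumes w: "walk (Gedge b l fin fout) xs" and h: "below l (hd xs)" and t: "\<not> below l (last xs)"
  shows "\<exists>p<length xs. \<exists>j. xs ! p = Main l j \<and> vecok l (2^b) j"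
proof (rule ccontr)
  assume nc: "\<not> ?thesis"
  have ne: "xs \<noteq> []" using w by (simp add: walk_def)
  have "\<forall>k<length xs. below l (xs ! k)"
  proof (intro allI impI)
    fix k assume "k < length xs"
    then show "below l (xs ! k)"
    proof (induction k)
      case 0 then show ?case using h ne by (simp add: hd_conv_nth)
    next
      case (Suc k)
      then have "below l (xs ! k)" by simp
      moreover have "Gedge b l fin fout (xs ! k) (xs ! Suc k)" using w Suc(2) by (simp add: walk_def)
      ultimately show ?case using below_edge nc Suc(2) by blast
    qed
  qed
  then have "below l (xs ! (length xs - 1))" using ne by simp
  then show False using t ne by (simp add: last_conv_nth)
qed

context ctx begin

lemma Fx0: "phiG b l Fx (Main 0 x) = 0"
  by (simp add: phiG_def Fx_def Pot_def)
lemma Fxl: "phiG b l Fx (Main l j) = int l * AA + (\<Sum>k<l. (int (j!k) - int (x!k))^2)"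
  by (simp add: phiG_def Fx_def Pot_def)
lemma Fz0: "phiG b l Fz (Main (2*l) z) = 0"
  by (simp add: phiG_def Fz_def Pot_def)
lemma Fzl: "phiG b l Fz (Main l j) = - (int l * AA + (\<Sum>k<l. (int (j!k) - int (z!k))^2))"
  by (simp add: phiG_def Fz_def Pot_def mult_2)

lemma lower:
  assumes w: "walk (Gedge b l fin fout) xs" and h: "hd xs = Main 0 x" and t: "last xs = Main (2*l) z"
  shows "\<exists>j. vecok l (2^b) j \<and> Main l j \<in> set xs \<and>
     2 * int l * AA + (\<Sum>k<l. (int (j!k) - int (x!k))^2) + (\<Sum>k<l. (int (j!k) - int (z!k))^2)
       \<le> int (length xs - 1)"
proof -
  have ne: "xs \<noteq> []" using w by (simp add: walk_def)
  have "below l (hd xs)" "\<not> below l (last xs)" using h t l1 by (auto simp: below_def)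
  then obtain p j where p: "p < length xs" "xs ! p = Main l j" "vecok l (2^b) j"
    using walk_cross[OF w] by blast
  define q where "q = length xs - 1"
  have q: "p \<le> q" "q < length xs" using p ne by (auto simp: q_def)
  have x0: "xs ! 0 = Main 0 x" using h ne by (simp add: hd_conv_nth)
  have zq: "xs ! q = Main (2*l) z" using t ne by (simp add: last_conv_nth q_def)
  have a1: "\<bar>phiG b l Fx (xs ! p) - phiG b l Fx (xs ! 0)\<bar> \<le> int (p - 0)"
    by (rule walk_pot[OF w lip_x]) (use p in auto)
  have a2: "\<bar>phiG b l Fz (xs ! q) - phiG b l Fz (xs ! p)\<bar> \<le> int (q - p)"
    by (rule walk_pot[OF w lip_z q])
  have "int l * AA + (\<Sum>k<l. (int (j!k) - int (x!k))^2) \<le> int p"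
    using a1 by (simp add: p x0 Fx0 Fxl)
  moreover have "int l * AA + (\<Sum>k<l. (int (j!k) - int (z!k))^2) \<le> int q - int p"
    using a2 q by (simp add: p zq Fz0 Fzl of_nat_diff)
  moreover have "Main l j \<in> set xs" using p nth_mem[of p xs] by simp
  ultimately show ?thesis using p(3) by (intro exI[of _ j]) (auto simp: q_def)
qed

end



lemma Gdel_empty: "Gdel b l fin fout {} = Gedge b l fin fout"
  by (intro ext) (simp add: Gdel_def)

lemma gdelI: "Gedge b l fin fout u v \<Longrightarrow> u \<notin> Main l ` R \<Longrightarrow> v \<notin> Main l ` R \<Longrightarrow> Gdel b l fin fout R u v"
  by (simp add: Gdel_def)

lemma pnode_notMain: "pnode b l fin fout i j j' k \<noteq> Main i' j''"
  by (simp add: pnode_def)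

context ctx begin

lemma tree_out: "i < 2*l \<Longrightarrow> vecok l (2^b) j \<Longrightarrow> length t \<le> b \<Longrightarrow>
   path (Gdel b l fin fout R) (Tout i j []) (Tout i j t) (length t)"
proof (induction t rule: rev_induct)
  case Nil then show ?case by (simp add: pnil)
next
  case (snoc a t)
  then have ih: "path (Gdel b l fin fout R) (Tout i j []) (Tout i j t) (length t)" by simp
  have "dedge b l fin fout (Tout i j t) (Tout i j (t @ [a]))"
    unfolding dedge_def using snoc.prems by auto
  then have "Gdel b l fin fout R (Tout i j t) (Tout i j (t @ [a]))"
    by (intro gdelI) (auto simp: Gedge_def)
  from path_trans[OF ih path_edge[of "Gdel b l fin fout R", OF this]] show ?case by simp
qed

lemma tree_in: "0 < i \<Longrightarrow> i \<le> 2*l \<Longrightarrow> vecok l (2^b) j \<Longrightarrow> length t \<le> b \<Longrightarrow>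
   path (Gdel b l fin fout R) (Tin i j t) (Tin i j []) (length t)"
proof (induction t rule: rev_induct)
  case Nil then show ?case by (simp add: pnil)
next
  case (snoc a t)
  then have ih: "path (Gdel b l fin fout R) (Tin i j t) (Tin i j []) (length t)" by simp
  have "dedge b l fin fout (Tin i j t) (Tin i j (t @ [a]))"
    unfolding dedge_def using snoc.prems by auto
  then have "Gdel b l fin fout R (Tin i j (t @ [a])) (Tin i j t)"
    by (intro gdelI) (auto simp: Gedge_def)
  from path_trans[OF path_edge[of "Gdel b l fin fout R", OF this] ih] show ?case by simp
qed

lemma seg_mid: "Hadj b l i j j' \<Longrightarrow> k \<le> plen b l i j j' \<Longrightarrow>
   path (Gdel b l fin fout R) (pnode b l fin fout i j j' 0) (pnode b l fin fout i j j' k) k"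
proof (induction k)
  case 0 then show ?case by (simp add: pnil)
next
  case (Suc k)
  then have ih: "path (Gdel b l fin fout R) (pnode b l fin fout i j j' 0) (pnode b l fin fout i j j' k) k" by simp
  have "dedge b l fin fout (pnode b l fin fout i j j' k) (pnode b l fin fout i j j' (Suc k))"
    unfolding dedge_def using Suc.prems by (intro disjI2) (metis Suc_le_lessD)
  then have "Gdel b l fin fout R (pnode b l fin fout i j j' k) (pnode b l fin fout i j j' (Suc k))"
    by (intro gdelI) (auto simp: Gedge_def pnode_notMain)
  from path_trans[OF ih path_edge[of "Gdel b l fin fout R", OF this]] show ?case by simp
qed

lemma seg_path:
  assumes H: "Hadj b l i j j'" and m1: "Main i j \<notin> Main l ` R" and m2: "Main (Suc i) j' \<notin> Main l ` R"
  shows "path (Gdel b l fin fout R) (Main i j) (Main (Suc i) j') (Hwt b l i j j')"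
proof -
  note f = Hadj_facts[OF H]
  define c where "c = cidx l i - 1"
  define t1 where "t1 = fout i j (j' ! c)"
  define t2 where "t2 = fin (Suc i) j' (j ! c)"
  define P where "P = plen b l i j j'"
  have W: "2 * b + 2 < Hwt b l i j j'" by (rule Hwt_big)
  then have PW: "Hwt b l i j j' = 1 + b + P + b + 1" by (simp add: P_def plen_def)
  have P0: "P \<noteq> 0" using W by (simp add: P_def plen_def)
  have lt1: "length t1 = b" unfolding t1_def
    by (rule leaf_len[OF hout[OF f(1) f(2)]]) (rule vecok_nth[OF f(3) f(4)[folded c_def]])
  have lt2: "length t2 = b" unfolding t2_def
    by (rule leaf_len[OF hin]) (use f vecok_nth[OF f(2) f(4)[folded c_def]] in auto)
  have e1: "Gdel b l fin fout R (Main i j) (Tout i j [])"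
    using m1 f by (intro gdelI) (auto simp: Gedge_def dedge_def)
  have e2: "Gdel b l fin fout R (Tin (Suc i) j' []) (Main (Suc i) j')"
    using m2 f by (intro gdelI) (auto simp: Gedge_def dedge_def)
  have p1: "path (Gdel b l fin fout R) (Tout i j []) (Tout i j t1) b"
    using tree_out[OF f(1) f(2), of t1 R] lt1 by simp
  have p2: "path (Gdel b l fin fout R) (Tout i j t1) (Tin (Suc i) j' t2) P"
    using seg_mid[OF H, of P R] P0 by (simp add: P_def pnode_def t1_def t2_def c_def)
  have p3: "path (Gdel b l fin fout R) (Tin (Suc i) j' t2) (Tin (Suc i) j' []) b"
    using tree_in[of "Suc i" j' t2 R] f lt2 by simp
  have "path (Gdel b l fin fout R) (Main i j) (Main (Suc i) j') (1 + b + P + b + 1)"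
    by (intro path_trans[OF path_trans[OF path_trans[OF path_trans[OF path_edge[of "Gdel b l fin fout R", OF e1] p1] p2] p3] path_edge[of "Gdel b l fin fout R", OF e2]])
  then show ?thesis using PW by simp
qed

end



context ctx begin

definition "yy = map (\<lambda>k. (x ! k + z ! k) div 2) [0..<l]"
definition "pv i = map (\<lambda>k. if i \<le> l then (if k < i then yy!k else x!k)
     else (if 2*l - i \<le> k then z!k else yy!k)) [0..<l]"

lemma lens: "length x = l" "length z = l" "length yy = l" "\<And>i. length (pv i) = l"
  using vx vz by (auto simp: vecok_def yy_def pv_def)

lemma yy_nth: "k < l \<Longrightarrow> yy ! k = (x!k + z!k) div 2"
  by (simp add: yy_def)

lemma yy_lt: "k < l \<Longrightarrow> yy ! k < 2^b"
proof -
  assume k: "k < l"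
  have "x!k + z!k < 2 * 2^b" using vecok_nth[OF vx k] vecok_nth[OF vz k] by linarith
  then show ?thesis using k by (simp add: yy_nth div_less_iff_less_mult)
qed

lemma pv_nth: "k < l \<Longrightarrow> pv i ! k = (if i \<le> l then (if k < i then yy!k else x!k)
     else (if 2*l - i \<le> k then z!k else yy!k))"
  by (simp add: pv_def)

lemma pv_ok: "vecok l (2^b) (pv i)"
  unfolding vecok_def using lens vecok_nth[OF vx] vecok_nth[OF vz] yy_lt by (auto simp: pv_nth)

lemma pv0: "pv 0 = x" by (rule nth_equalityI) (auto simp: lens pv_nth)
lemma pvl: "pv l = yy" by (rule nth_equalityI) (auto simp: lens pv_nth)
lemma pv2l: "pv (2*l) = z" using l1 by (intro nth_equalityI) (auto simp: lens pv_nth)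

lemma pv_Hadj: "i < 2*l \<Longrightarrow> Hadj b l i (pv i) (pv (Suc i))"
  unfolding Hadj_def
proof (intro conjI allI impI)
  assume i: "i < 2*l"
  show "vecok l (2^b) (pv i)" "vecok l (2^b) (pv (Suc i))" by (rule pv_ok)+
  fix k assume k: "k < l" "k \<noteq> cidx l i - 1"
  show "pv i ! k = pv (Suc i) ! k"
  proof (cases "i < l")
    case True
    then have "k \<noteq> i" using k(2) by (simp add: cidx_def)
    then show ?thesis using True k(1) by (simp add: pv_nth)
  next
    case False
    then have "k \<noteq> 2*l - Suc i" using k(2) i by (simp add: cidx_def)
    then have e: "(2*l - Suc i \<le> k) = (2*l - i \<le> k)" using False i by arith
    have ns: "\<not> Suc i \<le> l" using False by simp
    show ?thesis
    proof (cases "i = l")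
      case True
      then show ?thesis using k(1) e ns by (simp add: pv_nth)
    next
      case False
      then have "\<not> i \<le> l" using \<open>\<not> i < l\<close> by simp
      then show ?thesis using k(1) e ns by (simp add: pv_nth)
    qed
  qed
qed (simp)

lemma Hwt_low: "i < l \<Longrightarrow> int (Hwt b l i (pv i) (pv (Suc i))) = AA + (int (x!i) - int (yy!i))^2"
  by (simp add: Hwt_int cidx_def pv_nth)

lemma Hwt_high: "m < l \<Longrightarrow> int (Hwt b l (l+m) (pv (l+m)) (pv (Suc (l+m)))) = AA + (int (yy!(l - Suc m)) - int (z!(l - Suc m)))^2"
proof -
  assume m: "m < l"
  then have "\<not> (l - m \<le> l - Suc m)" "l - Suc m < l" "2 * l - Suc (l + m) = l - Suc m" by arith+
  then show ?thesis using m by (simp add: Hwt_int cidx_def pv_nth)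
qed

lemma upper:
  assumes yR: "yy \<notin> R"
  shows "\<exists>n. path (Gdel b l fin fout R) (Main 0 x) (Main (2*l) z) n \<and>
     int n = 2 * int l * AA + (\<Sum>k<l. (int (x!k) - int (yy!k))^2) + (\<Sum>k<l. (int (yy!k) - int (z!k))^2)"
proof -
  have okM: "Main i (pv i) \<notin> Main l ` R" for i
    using yR pvl by auto
  have ph1: "\<exists>n. path (Gdel b l fin fout R) (Main 0 x) (Main i (pv i)) n \<and>
     int n = int i * AA + (\<Sum>k<i. (int (x!k) - int (yy!k))^2)" if "i \<le> l" for i
    using that
  proof (induction i)
    case 0 then show ?case using pnil pv0 by fastforce
  next
    case (Suc i)
    then obtain n where n: "path (Gdel b l fin fout R) (Main 0 x) (Main i (pv i)) n"
      "int n = int i * AA + (\<Sum>k<i. (int (x!k) - int (yy!k))^2)" by auto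
    have s: "path (Gdel b l fin fout R) (Main i (pv i)) (Main (Suc i) (pv (Suc i))) (Hwt b l i (pv i) (pv (Suc i)))"
      by (rule seg_path[OF pv_Hadj okM okM]) (use Suc.prems in auto)
    have hw: "int (Hwt b l i (pv i) (pv (Suc i))) = AA + (int (x!i) - int (yy!i))^2"
      using Hwt_low[of i] Suc.prems by simp
    have sm: "(\<Sum>k<Suc i. (int (x!k) - int (yy!k))^2) = (\<Sum>k<i. (int (x!k) - int (yy!k))^2) + (int (x!i) - int (yy!i))^2"
      by (rule sum.lessThan_Suc)
    have "int (n + Hwt b l i (pv i) (pv (Suc i))) = int (Suc i) * AA + (\<Sum>k<Suc i. (int (x!k) - int (yy!k))^2)"
      unfolding of_nat_add hw n(2) sm of_nat_Suc by (simp add: algebra_simps)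
    then show ?case
      using path_trans[OF n(1) s] by blast
  qed
  have ph2: "\<exists>n. path (Gdel b l fin fout R) (Main 0 x) (Main (l+m) (pv (l+m))) n \<and>
     int n = int (l+m) * AA + (\<Sum>k<l. (int (x!k) - int (yy!k))^2) + (\<Sum>k\<in>{l-m..<l}. (int (yy!k) - int (z!k))^2)"
    if "m \<le> l" for m
    using that
  proof (induction m)
    case 0 then show ?case using ph1[of l] by simp
  next
    case (Suc m)
    then obtain n where n: "path (Gdel b l fin fout R) (Main 0 x) (Main (l+m) (pv (l+m))) n"
      "int n = int (l+m) * AA + (\<Sum>k<l. (int (x!k) - int (yy!k))^2) + (\<Sum>k\<in>{l-m..<l}. (int (yy!k) - int (z!k))^2)" by auto
    have s: "path (Gdel b l fin fout R) (Main (l+m) (pv (l+m))) (Main (Suc (l+m)) (pv (Suc (l+m)))) (Hwt b l (l+m) (pv (l+m)) (pv (Suc (l+m))))"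
      by (rule seg_path[OF pv_Hadj okM okM]) (use Suc.prems in auto)
    have st: "{l - Suc m..<l} = insert (l - Suc m) {l-m..<l}" 
    proof (rule set_eqI)
      fix k show "k \<in> {l - Suc m..<l} \<longleftrightarrow> k \<in> insert (l - Suc m) {l-m..<l}"
        using Suc.prems by simp arith
    qed
    have nm: "l - Suc m \<notin> {l-m..<l}" using Suc.prems by simp
    have "(\<Sum>k\<in>{l - Suc m..<l}. (int (yy!k) - int (z!k))^2) = (int (yy!(l - Suc m)) - int (z!(l - Suc m)))^2 + (\<Sum>k\<in>{l-m..<l}. (int (yy!k) - int (z!k))^2)"
      unfolding st by (rule sum.insert) (use nm in auto)
    note sm = this
    have hw: "int (Hwt b l (l+m) (pv (l+m)) (pv (Suc (l+m)))) = AA + (int (yy!(l - Suc m)) - int (z!(l - Suc m)))^2"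
      using Hwt_high[of m] Suc.prems by simp
    have "int (n + Hwt b l (l+m) (pv (l+m)) (pv (Suc (l+m)))) = int (l + Suc m) * AA + (\<Sum>k<l. (int (x!k) - int (yy!k))^2) + (\<Sum>k\<in>{l - Suc m..<l}. (int (yy!k) - int (z!k))^2)"
      unfolding of_nat_add hw n(2) sm of_nat_Suc by (simp add: algebra_simps)
    then show ?case
      using path_trans[OF n(1) s] by (metis add_Suc_right)
  qed
  from ph2[of l] obtain n where "path (Gdel b l fin fout R) (Main 0 x) (Main (l+l) (pv (l+l))) n"
    "int n = int (l+l) * AA + (\<Sum>k<l. (int (x!k) - int (yy!k))^2) + (\<Sum>k\<in>{l-l..<l}. (int (yy!k) - int (z!k))^2)"
    by auto
  moreover have "l + l = 2 * l" by simp
  moreover have "{l-l..<l} = {..<l}" by auto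
  ultimately show ?thesis using pv2l by (intro exI[of _ n]) (simp add: algebra_simps)
qed

end



lemma gdel_walk_avoid:
  assumes w: "walk (Gdel b l fin fout R) xs" and len: "2 \<le> length xs" and k: "k < length xs"
  shows "xs ! k \<notin> Main l ` R"
proof (cases "Suc k < length xs")
  case True
  then have "Gdel b l fin fout R (xs ! k) (xs ! Suc k)" using w by (simp add: walk_def)
  then show ?thesis by (simp add: Gdel_def)
next
  case False
  then have k1: "k = Suc (k - 1)" "Suc (k-1) < length xs" using len k by auto
  then have "Gdel b l fin fout R (xs ! (k-1)) (xs ! Suc (k-1))" using w unfolding walk_def by blast
  then show ?thesis using k1 by (metis Gdel_def)
qed

lemma sq_ge1: "(d::int) \<noteq> 0 \<Longrightarrow> 1 \<le> d^2"
proof -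
  assume "d \<noteq> 0"
  then have "1 \<le> \<bar>d\<bar>" by (cases "d > 0") auto
  then have "1 * 1 \<le> \<bar>d\<bar> * \<bar>d\<bar>" using mult_mono[of 1 "\<bar>d\<bar>" 1 "\<bar>d\<bar>"] by auto
  then show ?thesis by (simp add: power2_eq_square)
qed

context ctx begin

lemma two_y: assumes ev: "\<forall>k<l. even (int (z ! k) - int (x ! k))" and k: "k < l"
  shows "2 * int (yy ! k) = int (x!k) + int (z!k)"
proof -
  have "even (int (z ! k) - int (x ! k))" using ev k by simp
  then have "even (int (x!k) + int (z!k))"
    by (metis add.commute diff_add_cancel even_add)
  then have "even (x!k + z!k)" by (metis even_of_nat of_nat_add)
  then have "2 * ((x!k + z!k) div 2) = x!k + z!k" by simp
  then show ?thesis using k by (simp add: yy_nth)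
qed

lemma sum_id: assumes ev: "\<forall>k<l. even (int (z ! k) - int (x ! k))"
  shows "(\<Sum>k<l. (int (j!k) - int (x!k))^2) + (\<Sum>k<l. (int (j!k) - int (z!k))^2)
     = (\<Sum>k<l. (int (x!k) - int (yy!k))^2) + (\<Sum>k<l. (int (yy!k) - int (z!k))^2)
       + 2 * (\<Sum>k<l. (int (j!k) - int (yy!k))^2)"
proof -
  have "(int (j!k) - int (x!k))^2 + (int (j!k) - int (z!k))^2
     = (int (x!k) - int (yy!k))^2 + (int (yy!k) - int (z!k))^2 + 2 * (int (j!k) - int (yy!k))^2"
    if "k < l" for k
  proof -
    have h: "int (x!k) = 2 * int (yy ! k) - int (z!k)" using two_y[OF ev that] by simp
    show ?thesis unfolding h by (simp add: power2_eq_square algebra_simps)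
  qed
  then have "(\<Sum>k<l. (int (j!k) - int (x!k))^2 + (int (j!k) - int (z!k))^2)
     = (\<Sum>k<l. (int (x!k) - int (yy!k))^2 + (int (yy!k) - int (z!k))^2 + 2 * (int (j!k) - int (yy!k))^2)"
    by (intro sum.cong) auto
  then show ?thesis by (simp add: sum.distrib sum_distrib_left)
qed

lemma sum_pos: assumes "length j = l" "j \<noteq> yy"
  shows "1 \<le> (\<Sum>k<l. (int (j!k) - int (yy!k))^2)"
proof -
  obtain k where k: "k < l" "j!k \<noteq> yy!k" using assms lens(3) nth_equalityI by metis
  then have "int (j!k) - int (yy!k) \<noteq> 0" by simp
  then have "1 \<le> (int (j!k) - int (yy!k))^2" by (rule sq_ge1)
  also have "\<dots> \<le> (\<Sum>k<l. (int (j!k) - int (yy!k))^2)"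
    by (rule member_le_sum) (use k in auto)
  finally show ?thesis .
qed

definition "D0 = 2 * int l * AA + (\<Sum>k<l. (int (x!k) - int (yy!k))^2) + (\<Sum>k<l. (int (yy!k) - int (z!k))^2)"

lemma lowerD:
  assumes ev: "\<forall>k<l. even (int (z ! k) - int (x ! k))"
    and w: "walk (Gedge b l fin fout) xs" and h: "hd xs = Main 0 x" and t: "last xs = Main (2*l) z"
  shows "\<exists>j. Main l j \<in> set xs \<and> D0 \<le> int (length xs - 1) \<and> (j \<noteq> yy \<longrightarrow> D0 + 2 \<le> int (length xs - 1))"
proof -
  obtain j where j: "vecok l (2^b) j" "Main l j \<in> set xs"
    "2 * int l * AA + (\<Sum>k<l. (int (j!k) - int (x!k))^2) + (\<Sum>k<l. (int (j!k) - int (z!k))^2)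
       \<le> int (length xs - 1)"
    using lower[OF w h t] by blast
  have nn: "0 \<le> (\<Sum>k<l. (int (j!k) - int (yy!k))^2)" by (simp add: sum_nonneg)
  have "j \<noteq> yy \<Longrightarrow> 1 \<le> (\<Sum>k<l. (int (j!k) - int (yy!k))^2)"
    using sum_pos j(1) by (simp add: vecok_def)
  then show ?thesis using j nn sum_id[OF ev, of j] unfolding D0_def
    by (intro exI[of _ j]) auto
qed

end


theorem mainTheorem7:
  fixes b l :: nat and fin fout :: "nat \<Rightarrow> nat list \<Rightarrow> nat \<Rightarrow> bool list"
    and R :: "nat list set" and x z :: "nat list"
  assumes "b \<ge> 1" and "l \<ge> 1"
    and "\<And>i j. 0 < i \<Longrightarrow> i \<le> 2 * l \<Longrightarrow> vecok l (2 ^ b) j \<Longrightarrow>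
           bij_betw (fin i j) {..<2 ^ b} {t. length t = b}"
    and "\<And>i j. i < 2 * l \<Longrightarrow> vecok l (2 ^ b) j \<Longrightarrow>
           bij_betw (fout i j) {..<2 ^ b} {t. length t = b}"
    and "R \<subseteq> {j. vecok l (2 ^ b) j}"
    and "vecok l (2 ^ b) x" and "vecok l (2 ^ b) z"
    and "\<forall>k<l. even (int (z ! k) - int (x ! k))"
  shows "map (\<lambda>k. (x ! k + z ! k) div 2) [0..<l] \<notin> R \<longleftrightarrow>
         gdist (Gdel b l fin fout R) (Main 0 x) (Main (2 * l) z)
           = gdist (Gedge b l fin fout) (Main 0 x) (Main (2 * l) z)"
  proof -
  note ev = assms(8)
  interpret ctx b l fin fout x z using assms by unfold_locales auto
  have yy: "map (\<lambda>k. (x ! k + z ! k) div 2) [0..<l] = yy" by (simp add: yy_def)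
  obtain n0 where n0: "path (Gdel b l fin fout {}) (Main 0 x) (Main (2*l) z) n0" "int n0 = D0"
    using upper[of "{}"] unfolding D0_def by auto
  have up: "gdist (Gedge b l fin fout) (Main 0 x) (Main (2 * l) z) \<le> enat n0"
    using gdist_le[OF n0(1)] by (simp add: Gdel_empty)
  have lowG: "enat n0 \<le> enat (length xs - 1)" if "walk (Gedge b l fin fout) xs" "hd xs = Main 0 x"
     "last xs = Main (2*l) z" for xs
    using lowerD[OF ev that] n0(2) by auto
  have sub: "walk (Gedge b l fin fout) xs" if "walk (Gdel b l fin fout R) xs" for xs
    using that by (rule walk_mono) (simp add: Gdel_def)
  have lo: "enat n0 \<le> gdist (Gedge b l fin fout) (Main 0 x) (Main (2 * l) z)"
    unfolding gdist_def using lowG by (auto intro!: INF_greatest)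
  have lo': "enat n0 \<le> gdist (Gdel b l fin fout R) (Main 0 x) (Main (2 * l) z)"
    unfolding gdist_def using lowG sub by (auto intro!: INF_greatest)
  have eqG: "gdist (Gedge b l fin fout) (Main 0 x) (Main (2 * l) z) = enat n0"
    using up lo by simp
  show ?thesis
  proof (cases "yy \<in> R")
    case False
    obtain n1 where n1: "path (Gdel b l fin fout R) (Main 0 x) (Main (2*l) z) n1" "int n1 = D0"
      using upper[OF False] unfolding D0_def by auto
    have "n1 = n0" using n0(2) n1(2) by simp
    then have "gdist (Gdel b l fin fout R) (Main 0 x) (Main (2 * l) z) \<le> enat n0"
      using gdist_le[OF n1(1)] by simp
    then show ?thesis using lo' eqG False yy by simp
  next
    case True
    have lowD: "enat (n0 + 2) \<le> enat (length xs - 1)" if w: "walk (Gdel b l fin fout R) xs" and h: "hd xs = Main 0 x"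
     and t: "last xs = Main (2*l) z" for xs
    proof -
      obtain j where j: "Main l j \<in> set xs" "D0 \<le> int (length xs - 1)"
        "j \<noteq> yy \<longrightarrow> D0 + 2 \<le> int (length xs - 1)"
        using lowerD[OF ev sub[OF w] h t] by blast
      have ne: "xs \<noteq> []" using w by (simp add: walk_def)
      have "length xs \<noteq> 1"
      proof
        assume "length xs = 1"
        then have "hd xs = last xs" by (cases xs) auto
        then show False using h t l1 by simp
      qed
      then have len: "2 \<le> length xs" using ne by (cases xs) (auto simp: Suc_le_eq)
      obtain k where k: "k < length xs" "xs ! k = Main l j" using j(1) by (metis in_set_conv_nth)
      have "Main l j \<notin> Main l ` R" using gdel_walk_avoid[OF w len k(1)] k(2) by simp
      then have "j \<noteq> yy" using True by auto
      then show ?thesis using j(3) n0(2) by simp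
    qed
    have "enat (n0 + 2) \<le> gdist (Gdel b l fin fout R) (Main 0 x) (Main (2 * l) z)"
      unfolding gdist_def using lowD by (auto intro!: INF_greatest)
    then show ?thesis using eqG True yy by auto
  qed
qed

end
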